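(* Let $n\ge 3$ and let $G$ be a graph on $2n$ vertices with at least $n^2-1$ edges that contains no two distinct vertices of the same degree joined by a path of length three. Let $\beta$ be the largest integer such that $G$ contains two distinct vertices of degree $\beta$. Then $\beta\le n+1$. In particular, if $\beta=n+1$, then $G$ is isomorphic to $K_{n+1,n-1}$.
   Context: A path of length three joining vertices $a$ and $b$ is a path $a\,x\,y\,b$ with four distinct vertices and three edges. Graphs are finite and simple. *)

theory Defs
  imports Main
begin

definition simple_graph :: "'a set \<Rightarrow> ('a \<Rightarrow> 'a \<Rightarrow> bool) \<Rightarrow> bool" where
  "simple_graph V E \<longleftrightarrow> finite V \<and> (\<forall>x y. E x y \<longrightarrow> x \<in> V \<and> y \<in> V)
     \<and> (\<forall>x y. E x y \<longrightarrow> E y x) \<and> (\<forall>x. \<not> E x x)"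

definition edges :: "'a set \<Rightarrow> ('a \<Rightarrow> 'a \<Rightarrow> bool) \<Rightarrow> 'a set set" where
  "edges V E = {{x, y} | x y. x \<in> V \<and> y \<in> V \<and> E x y}"

definition degree :: "'a set \<Rightarrow> ('a \<Rightarrow> 'a \<Rightarrow> bool) \<Rightarrow> 'a \<Rightarrow> nat" where
  "degree V E x = card {y \<in> V. E x y}"

definition path3 :: "'a set \<Rightarrow> ('a \<Rightarrow> 'a \<Rightarrow> bool) \<Rightarrow> 'a \<Rightarrow> 'a \<Rightarrow> bool" where
  "path3 V E a b \<longleftrightarrow> (\<exists>x y. x \<in> V \<and> y \<in> V \<and> distinct [a, x, y, b]
      \<and> E a x \<and> E x y \<and> E y b)"

definition graph_iso :: "'a set \<Rightarrow> ('a \<Rightarrow> 'a \<Rightarrow> bool) \<Rightarrow> 'b set \<Rightarrow> ('b \<Rightarrow> 'b \<Rightarrow> bool) \<Rightarrow> bool" where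
  "graph_iso V E W F \<longleftrightarrow> (\<exists>f. bij_betw f V W \<and> (\<forall>x\<in>V. \<forall>y\<in>V. E x y \<longleftrightarrow> F (f x) (f y)))"

definition KV :: "nat \<Rightarrow> nat \<Rightarrow> (nat + nat) set" where
  "KV p q = Inl ` {..<p} \<union> Inr ` {..<q}"

definition KE :: "nat \<Rightarrow> nat \<Rightarrow> (nat + nat) \<Rightarrow> (nat + nat) \<Rightarrow> bool" where
  "KE p q u v \<longleftrightarrow> u \<in> KV p q \<and> v \<in> KV p q \<and>
     ((isl u \<and> \<not> isl v) \<or> (\<not> isl u \<and> isl v))"

end

theory Submission
  imports Defs
begin

lemma sum_distinct_nat:
  fixes S :: "nat set"
  assumes "finite S"
  shows "card S * card S \<le> 2 * \<Sum>S + card S"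
  using assms
proof (induction "card S" arbitrary: S)
  case 0
  then show ?case by simp
next
  case (Suc m)
  then have ne: "S \<noteq> {}" by auto
  define M where "M = Max S"
  have MS: "M \<in> S" using Suc.prems ne by (simp add: M_def)
  have cS': "card (S - {M}) = m" using Suc.hyps(2) MS Suc.prems by simp
  have IH: "m * m \<le> 2 * \<Sum>(S - {M}) + m"
    using Suc.hyps(1)[of "S - {M}"] cS' Suc.prems by simp
  have "S \<subseteq> {0..M}" using Suc.prems by (auto simp: M_def)
  then have "card S \<le> card {0..M}" by (intro card_mono) auto
  then have Mge: "m \<le> M" using Suc.hyps(2) by simp
  have sumS: "\<Sum>S = M + \<Sum>(S - {M})"
    using Suc.prems MS by (simp add: sum.remove)
  show ?case using IH Mge sumS Suc.hyps(2)[symmetric] by simp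
qed

definition ec :: "('a \<Rightarrow> 'a \<Rightarrow> bool) \<Rightarrow> 'a set \<Rightarrow> 'a set \<Rightarrow> nat" where
  "ec E A B = (\<Sum>a\<in>A. card {b\<in>B. E a b})"

lemma ec_Un2:
  assumes "finite B" "finite B'" "B \<inter> B' = {}"
  shows "ec E A (B \<union> B') = ec E A B + ec E A B'"
proof -
  have "card {b\<in>B \<union> B'. E a b} = card {b\<in>B. E a b} + card {b\<in>B'. E a b}" for a
  proof -
    have "{b\<in>B \<union> B'. E a b} = {b\<in>B. E a b} \<union> {b\<in>B'. E a b}" by auto
    then show ?thesis using assms by (simp add: card_Un_disjoint disjoint_iff)
  qed
  then show ?thesis by (simp add: ec_def sum.distrib)
qed

lemma ec_Un1:
  assumes "finite A" "finite A'" "A \<inter> A' = {}"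
  shows "ec E (A \<union> A') B = ec E A B + ec E A' B"
  using assms by (simp add: ec_def sum.union_disjoint)

lemma ec_Sigma:
  assumes "finite A" "finite B"
  shows "ec E A B = card (SIGMA a:A. {b\<in>B. E a b})"
  using assms by (simp add: ec_def)

lemma ec_sym:
  assumes "finite A" "finite B" "\<And>x y. E x y \<Longrightarrow> E y x"
  shows "ec E A B = ec E B A"
proof -
  have "(\<lambda>(x,y). (y,x)) ` (SIGMA a:A. {b\<in>B. E a b}) = (SIGMA b:B. {a\<in>A. E b a})"
    using assms(3) by (auto simp: image_iff)
  moreover have "inj_on (\<lambda>(x,y). (y,x)) (SIGMA a:A. {b\<in>B. E a b})"
    by (auto simp: inj_on_def)
  ultimately have "card (SIGMA b:B. {a\<in>A. E b a}) = card (SIGMA a:A. {b\<in>B. E a b})"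
    by (metis card_image)
  then show ?thesis using assms by (simp add: ec_Sigma)
qed

lemma ec_zero:
  assumes "\<And>a b. a \<in> A \<Longrightarrow> b \<in> B \<Longrightarrow> \<not> E a b"
  shows "ec E A B = 0"
proof -
  have "{b\<in>B. E a b} = {}" if "a \<in> A" for a using assms that by auto
  then have "card {b\<in>B. E a b} = 0" if "a \<in> A" for a using that by (metis card.empty)
  then show ?thesis unfolding ec_def by (intro sum.neutral) blast
qed

lemma handshake:
  assumes g: "simple_graph V E"
  shows "ec E V V = 2 * card (edges V E)"
proof -
  have fV: "finite V" using g by (simp add: simple_graph_def)
  have sym: "E x y \<Longrightarrow> E y x" for x y using g by (simp add: simple_graph_def)
  have irr: "\<not> E x x" for x using g by (simp add: simple_graph_def)
  define P where "P = (SIGMA a:V. {b\<in>V. E a b})"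
  define fib where "fib e = {p\<in>P. {fst p, snd p} = e}" for e
  have fE: "finite (edges V E)"
  proof -
    have "edges V E \<subseteq> (\<lambda>(x,y). {x,y}) ` (V \<times> V)" by (auto simp: edges_def)
    then show ?thesis using fV finite_subset by blast
  qed
  have PU: "P = (\<Union>e\<in>edges V E. fib e)"
    by (auto simp: P_def fib_def edges_def; blast)
  have fP: "finite P" using fV by (simp add: P_def)
  have "card P = (\<Sum>e\<in>edges V E. card (fib e))"
    unfolding PU
    by (rule card_UN_disjoint) (use fE fP in \<open>auto simp: fib_def\<close>)
  also have "\<dots> = (\<Sum>e\<in>edges V E. 2)"
  proof (rule sum.cong)
    fix e assume "e \<in> edges V E"
    then obtain x y where e: "e = {x,y}" "x \<in> V" "y \<in> V" "E x y" by (auto simp: edges_def)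
    have xy: "x \<noteq> y" using e irr by auto
    have "fib e = {(x,y),(y,x)}"
      using e sym by (auto simp: fib_def P_def doubleton_eq_iff)
    then show "card (fib e) = 2" using xy by simp
  qed simp
  finally show ?thesis using fV by (simp add: ec_Sigma P_def)
qed

lemma abs_lemma:
  fixes C W :: "'a set" and N :: "'a \<Rightarrow> 'a set" and F :: "'a \<Rightarrow> 'a \<Rightarrow> bool"
  assumes fC: "finite C" and fW: "finite W"
    and NW: "\<And>w. w \<in> C \<Longrightarrow> N w \<subseteq> W"
    and ne: "\<And>w1 w2 a b. w1 \<in> C \<Longrightarrow> w2 \<in> C \<Longrightarrow> w1 \<noteq> w2 \<Longrightarrow> card (N w1) = card (N w2)
              \<Longrightarrow> a \<in> N w1 \<Longrightarrow> b \<in> N w2 \<Longrightarrow> \<not> F a b"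
    and big: "card W + 2 \<le> card C"
  shows "2 * (\<Sum>w\<in>C. card (N w)) + (\<Sum>z\<in>W. card {y\<in>W. F z y}) \<le> 2 * card C * card W
     \<and> (2 * (\<Sum>w\<in>C. card (N w)) + (\<Sum>z\<in>W. card {y\<in>W. F z y}) = 2 * card C * card W
          \<longrightarrow> (\<forall>z\<in>W. \<forall>y\<in>W. \<not> F z y) \<and> (\<forall>w\<in>C. N w = W))"
proof -
  define p where "p = card W"
  define c where "c = card C"
  define g where "g w = card (N w)" for w
  have gp: "g w \<le> p" if "w \<in> C" for w
    unfolding g_def p_def using NW[OF that] fW by (simp add: card_mono)
  have "\<not> inj_on g C"
  proof
    assume inj: "inj_on g C"
    have "g ` C \<subseteq> {0..p}" using gp by auto
    then have "card (g ` C) \<le> Suc p" using card_mono[of "{0..p}" "g ` C"] by simp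
    then show False using inj big card_image[OF inj] by (simp add: p_def)
  qed
  then obtain w1 w2 where w12: "w1 \<in> C" "w2 \<in> C" "w1 \<noteq> w2" "g w1 = g w2"
    unfolding inj_on_def by blast
  define D where "D = {g w | w. w \<in> C \<and> (\<exists>w'\<in>C. w' \<noteq> w \<and> g w' = g w)}"
  have finD: "finite D"
  proof -
    have "D \<subseteq> g ` C" by (auto simp: D_def)
    then show ?thesis using fC finite_subset by blast
  qed
  have "g w1 \<in> D" using w12 unfolding D_def by blast
  then have neD: "D \<noteq> {}" by blast
  define j where "j = Max D"
  have "j \<in> D" using finD neD by (simp add: j_def)
  then obtain a1 a2 where a12: "a1 \<in> C" "a2 \<in> C" "a1 \<noteq> a2" "g a1 = j" "g a2 = j"
    unfolding D_def by blast
  have dupj: "g w \<le> j" if "w \<in> C" "w' \<in> C" "w' \<noteq> w" "g w' = g w" for w w'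
  proof -
    have "g w \<in> D" using that unfolding D_def by blast
    then show ?thesis using finD by (simp add: j_def)
  qed
  have jp: "j \<le> p" using gp a12 by auto
  define q where "q = p - j"
  define A where "A = N a1"
  define B where "B = N a2"
  have AW: "A \<subseteq> W" and BW: "B \<subseteq> W" using NW a12 by (auto simp: A_def B_def)
  have cA: "card A = j" and cB: "card B = j" using a12 by (auto simp: A_def B_def g_def)
  have noAB: "\<not> F a b" if "a \<in> A" "b \<in> B" for a b
  proof -
    have "card (N a1) = card (N a2)" using a12 by (simp add: g_def)
    moreover have "a \<in> N a1" "b \<in> N a2" using that by (simp_all add: A_def B_def)
    ultimately show ?thesis using ne[OF a12(1) a12(2) a12(3)] by blast
  qed
  define SF where "SF = (\<Sum>z\<in>W. card {y\<in>W. F z y})"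
  have SF_le: "SF \<le> j * q + q * p"
  proof -
    have "SF = (\<Sum>z\<in>A. card {y\<in>W. F z y}) + (\<Sum>z\<in>W - A. card {y\<in>W. F z y})"
      unfolding SF_def using sum.subset_diff[OF AW fW, of "\<lambda>z. card {y\<in>W. F z y}"] by simp
    moreover have "(\<Sum>z\<in>A. card {y\<in>W. F z y}) \<le> (\<Sum>z\<in>A. q)"
    proof (rule sum_mono)
      fix z assume z: "z \<in> A"
      have "{y\<in>W. F z y} \<subseteq> W - B" using noAB z by auto
      then have "card {y\<in>W. F z y} \<le> card (W - B)" using fW by (simp add: card_mono)
      also have "\<dots> = q" using BW fW cB by (simp add: card_Diff_subset q_def p_def finite_subset)
      finally show "card {y\<in>W. F z y} \<le> q" .
    qed
    moreover have "(\<Sum>z\<in>W - A. card {y\<in>W. F z y}) \<le> (\<Sum>z\<in>W - A. p)"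
      by (rule sum_mono) (simp add: p_def fW card_mono)
    moreover have "card (W - A) = q" using AW fW cA by (simp add: card_Diff_subset q_def p_def finite_subset)
    ultimately show ?thesis using cA by simp
  qed
  define T where "T = {w\<in>C. j < g w}"
  define h where "h w = p - g w" for w
  define t where "t = card T"
  have TC: "T \<subseteq> C" by (auto simp: T_def)
  have fT: "finite T" using fC TC finite_subset by blast
  have injh: "inj_on h T"
  proof (rule inj_onI)
    fix x y assume xy: "x \<in> T" "y \<in> T" "h x = h y"
    have xC: "x \<in> C" and yC: "y \<in> C" and jx: "j < g x" and jy: "j < g y"
      using xy by (auto simp: T_def)
    have "g x = g y" using gp[OF xC] gp[OF yC] xy(3) unfolding h_def by linarith
    show "x = y"
    proof (rule ccontr)
      assume "x \<noteq> y"
      then have "g y \<le> j" using dupj[OF yC xC] \<open>g x = g y\<close> by blast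
      then show False using jy by linarith
    qed
  qed
  have hT: "h ` T \<subseteq> {..<q}"
  proof
    fix z assume "z \<in> h ` T"
    then obtain w where w: "w \<in> T" "z = h w" by blast
    then have "w \<in> C" "j < g w" by (auto simp: T_def)
    then show "z \<in> {..<q}" using gp[of w] w(2) unfolding h_def q_def by simp
  qed
  have tq: "t \<le> q" using card_mono[OF _ hT] card_image[OF injh] by (simp add: t_def)
  have ST: "t * t \<le> 2 * (\<Sum>w\<in>T. h w) + t"
  proof -
    have "card (h ` T) * card (h ` T) \<le> 2 * \<Sum>(h ` T) + card (h ` T)"
      using fT by (intro sum_distinct_nat) simp
    then show ?thesis using sum.reindex[OF injh, of id] card_image[OF injh] by (simp add: t_def)
  qed
  define SH where "SH = (\<Sum>w\<in>C. h w)"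
  define SG where "SG = (\<Sum>w\<in>C. g w)"
  have SGH: "SG + SH = c * p"
  proof -
    have "SG + SH = (\<Sum>w\<in>C. g w + h w)" by (simp add: SG_def SH_def sum.distrib)
    also have "\<dots> = (\<Sum>w\<in>C. p)" using gp by (intro sum.cong) (auto simp: h_def)
    finally show ?thesis by (simp add: c_def)
  qed
  have SH_ge: "SH \<ge> (\<Sum>w\<in>T. h w) + (c - t) * q"
  proof -
    have "SH = (\<Sum>w\<in>T. h w) + (\<Sum>w\<in>C - T. h w)"
      unfolding SH_def using sum.subset_diff[OF TC fC, of h] by simp
    moreover have "(\<Sum>w\<in>C - T. h w) \<ge> (\<Sum>w\<in>C - T. q)"
      by (rule sum_mono) (auto simp: T_def h_def q_def)
    moreover have "card (C - T) = c - t" using fC TC by (simp add: card_Diff_subset c_def t_def fT)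
    ultimately show ?thesis by simp
  qed
  have tc: "t \<le> c" using fC TC by (simp add: card_mono c_def t_def)
  have cbig: "p + 2 \<le> c" using big by (simp add: p_def c_def)
  have main: "2 * SG + SF \<le> 2 * c * p \<and> (0 < q \<longrightarrow> 2 * SG + SF < 2 * c * p)"
  proof -
    obtain s where s: "q = t + s" using tq le_Suc_ex by blast
    obtain e where e: "c = p + 2 + e" using cbig le_Suc_ex by blast
    have pj: "p = j + q" using jp q_def by simp
    have ct: "c - t = j + s + 2 + e" using e s pj by simp
    have "SF + (if 0 < q then 1 else 0) \<le> 2 * SH"
    proof -
      have "2 * SH \<ge> 2 * (\<Sum>w\<in>T. h w) + 2 * ((c - t) * q)" using SH_ge by simp
      moreover have "SF \<le> j * q + q * p" by (rule SF_le)
      ultimately show ?thesis using ST unfolding ct s pj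
        by (auto simp: algebra_simps)
    qed
    then show ?thesis using SGH by (auto simp: algebra_simps split: if_splits)
  qed
  show ?thesis
  proof
    show "2 * (\<Sum>w\<in>C. card (N w)) + (\<Sum>z\<in>W. card {y\<in>W. F z y}) \<le> 2 * card C * card W"
      using main by (simp add: SG_def SF_def g_def c_def p_def)
  next
    show "2 * (\<Sum>w\<in>C. card (N w)) + (\<Sum>z\<in>W. card {y\<in>W. F z y}) = 2 * card C * card W
          \<longrightarrow> (\<forall>z\<in>W. \<forall>y\<in>W. \<not> F z y) \<and> (\<forall>w\<in>C. N w = W)"
    proof
      assume eq: "2 * (\<Sum>w\<in>C. card (N w)) + (\<Sum>z\<in>W. card {y\<in>W. F z y}) = 2 * card C * card W"
      then have eq': "2 * SG + SF = 2 * c * p" by (simp add: SG_def SF_def g_def c_def p_def)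
      then have "q = 0" using main by auto
      then have "j = p" using jp q_def by simp
      then have "A = W" "B = W" using AW BW cA cB fW by (auto simp: p_def card_subset_eq)
      then have Fno: "\<forall>z\<in>W. \<forall>y\<in>W. \<not> F z y" using noAB by auto
      then have "{y\<in>W. F z y} = {}" if "z \<in> W" for z using that by blast
      then have "card {y\<in>W. F z y} = 0" if "z \<in> W" for z using that by (metis card.empty)
      then have "SF = 0" unfolding SF_def by (intro sum.neutral) blast
      then have "SH = 0" using eq' SGH by simp
      then have "h w = 0" if "w \<in> C" for w using fC that unfolding SH_def by simp
      then have "N w = W" if "w \<in> C" for w
        using gp[OF that] NW[OF that] fW that unfolding h_def g_def p_def
        by (metis card_subset_eq diff_is_0_eq le_antisym)
      then show "(\<forall>z\<in>W. \<forall>y\<in>W. \<not> F z y) \<and> (\<forall>w\<in>C. N w = W)" using Fno by blast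
    qed
  qed
qed

lemma core:
  fixes V :: "'a set" and E :: "'a \<Rightarrow> 'a \<Rightarrow> bool" and n b :: nat
  assumes g: "simple_graph V E"
    and n3: "n \<ge> 3"
    and cV: "card V = 2 * n"
    and cE: "card (edges V E) \<ge> n\<^sup>2 - 1"
    and H: "\<forall>u\<in>V. \<forall>v\<in>V. u \<noteq> v \<and> degree V E u = degree V E v \<longrightarrow> \<not> path3 V E u v"
    and uV: "u \<in> V" and vV: "v \<in> V" and uv: "u \<noteq> v"
    and du: "degree V E u = b" and dv: "degree V E v = b" and bn: "n + 1 \<le> b"
  shows "b = n + 1 \<and> graph_iso V E (KV (n + 1) (n - 1)) (KE (n + 1) (n - 1))"
proof -
  have fV: "finite V" using g by (simp add: simple_graph_def)
  have sym: "E x y \<Longrightarrow> E y x" for x y using g by (simp add: simple_graph_def)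
  have irr: "\<not> E x x" for x using g by (simp add: simple_graph_def)
  have cl: "E x y \<Longrightarrow> x \<in> V \<and> y \<in> V" for x y using g by (simp add: simple_graph_def)
  have Ene: "x \<noteq> y" if "E x y" for x y using irr that by metis
  define Nb where "Nb x = {y\<in>V. E x y}" for x
  have degNb: "degree V E x = card (Nb x)" for x by (simp add: degree_def Nb_def)
  have fNb: "finite (Nb x)" for x using fV by (simp add: Nb_def)
  have Hp: False if "a \<in> V" "d \<in> V" "a \<noteq> d" "degree V E a = degree V E d"
     "distinct [a, x, y, d]" "E a x" "E x y" "E y d" for a d x y
  proof -
    have "path3 V E a d" unfolding path3_def using that cl by blast
    then show False using H that by blast
  qed
  define C where "C = Nb u \<inter> Nb v"
  define W where "W = V - (Nb u \<union> Nb v)"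
  define c where "c = card C"
  define p where "p = card W"
  have fC: "finite C" using fNb by (simp add: C_def)
  have fW: "finite W" using fV by (simp add: W_def)
  have CV: "C \<subseteq> V" by (auto simp: C_def Nb_def)
  have CW: "C \<inter> W = {}" by (auto simp: C_def W_def)
  have cU: "card (Nb u \<union> Nb v) + c = 2 * b"
    using card_Un_Int[OF fNb fNb, of u v] du dv degNb by (simp add: c_def C_def)
  have cW: "p + card (Nb u \<union> Nb v) = 2 * n"
  proof -
    have "Nb u \<union> Nb v \<subseteq> V" by (auto simp: Nb_def)
    then show ?thesis using card_Diff_subset[of "Nb u \<union> Nb v" V] fNb cV card_mono[OF fV]
      by (simp add: p_def W_def)
  qed
  have factA: "y = u \<or> y = v \<or> y \<in> W" if w: "w \<in> C" and wy: "E w y" for w y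
  proof (rule ccontr)
    assume "\<not> (y = u \<or> y = v \<or> y \<in> W)"
    then have yu: "y \<noteq> u" and yv: "y \<noteq> v" and yW: "y \<notin> W" by auto
    have yV: "y \<in> V" using cl wy by blast
    have wV: "w \<in> V" using cl wy by blast
    have Euw: "E u w" and Evw: "E v w" using w by (auto simp: C_def Nb_def)
    from yW yV have "E u y \<or> E v y" by (auto simp: W_def Nb_def)
    then show False
    proof
      assume Euy: "E u y"
      have "E y u" using sym[OF Euy] .
      then show False using Hp[of v u w y] vV uV uv du dv Evw wy yu yv Ene[OF Evw] Ene[OF wy] Ene[OF Euw]
        by auto
    next
      assume Evy: "E v y"
      have "E y v" using sym[OF Evy] .
      then show False using Hp[of u v w y] vV uV uv du dv Euw wy yu yv Ene[OF Evw] Ene[OF wy] Ene[OF Euw]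
        by auto
    qed
  qed
  have nuv: "\<not> E u v"
  proof
    assume Euv: "E u v"
    have uW: "u \<notin> W" and vW: "v \<notin> W" using Euv sym[OF Euv] uV vV by (auto simp: W_def Nb_def)
    define f where "f w = card (Nb w \<inter> W)" for w
    have degf: "degree V E w = 2 + f w" if "w \<in> C" for w
    proof -
      have "E u w" "E v w" using that by (auto simp: C_def Nb_def)
      then have "E w u" "E w v" using sym by blast+
      then have "Nb w = insert u (insert v (Nb w \<inter> W))"
        using factA[OF that] that uV vV by (auto simp: Nb_def C_def)
      then have "card (Nb w) = card (insert u (insert v (Nb w \<inter> W)))" by simp
      also have "\<dots> = 2 + card (Nb w \<inter> W)" using uW vW uv fNb[of w] by simp
      finally show ?thesis using degNb by (simp add: f_def)
    qed
    have "inj_on f C"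
    proof (rule inj_onI)
      fix w1 w2 assume w: "w1 \<in> C" "w2 \<in> C" "f w1 = f w2"
      show "w1 = w2"
      proof (rule ccontr)
        assume ne: "w1 \<noteq> w2"
        have "E v w2" "E u w1" "E v w1" "E u w2" using w by (auto simp: C_def Nb_def)
        moreover have "E w1 u" using sym[OF \<open>E u w1\<close>] .
        then show False using Hp[of w1 w2 u v] w ne degf CV Euv irr uv
          by (auto simp: C_def Nb_def)
      qed
    qed
    moreover have "f ` C \<subseteq> {0..p}" using fW by (auto simp: f_def p_def card_mono)
    ultimately have "c \<le> Suc p" using card_image card_mono[of "{0..p}" "f ` C"]
      by (metis c_def card_atLeastAtMost finite_atLeastAtMost minus_nat.diff_0)
    then show False using cU cW bn by linarith
  qed
  have nvu: "\<not> E v u" using nuv sym by metis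
  have uW: "u \<in> W" and vW: "v \<in> W" using nuv nvu irr uV vV by (auto simp: W_def Nb_def)
  have factA': "y \<in> W" if "w \<in> C" "E w y" for w y using factA[OF that] uW vW by blast
  define X where "X = Nb u - Nb v"
  define Y where "Y = Nb v - Nb u"
  define k where "k = card X"
  have fX: "finite X" and fY: "finite Y" using fNb by (auto simp: X_def Y_def)
  have kX: "k + c = b" using card_Diff_subset_Int[of "Nb v" "Nb u"] fNb du degNb
    card_Int_Diff[OF fNb, of u "Nb v"]
    by (simp add: k_def c_def X_def C_def)
  have kY: "card Y + c = b" using fNb dv degNb card_Int_Diff[OF fNb, of v "Nb u"]
    by (simp add: c_def Y_def C_def Int_commute)
  have kY': "card Y = k" using kX kY by simp
  have factX: "y \<in> V \<and> \<not> E v y \<and> y \<noteq> v" if x: "x \<in> X" and xy: "E x y" for x y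
  proof -
    have yV: "y \<in> V" using cl xy by blast
    have Eux: "E u x" and nvx: "\<not> E v x" and xV: "x \<in> V" using x by (auto simp: X_def Nb_def)
    have "\<not> E v y"
    proof
      assume Evy: "E v y"
      have "u \<noteq> y" using Evy nvu by blast
      moreover have "x \<noteq> v" using Eux nuv by blast
      moreover have "E y v" using sym[OF Evy] .
      ultimately show False using Hp[of u v x y] uV vV uv du dv Eux xy Ene[OF Eux] Ene[OF xy] Ene[OF Evy]
        by auto
    qed
    moreover have "y \<noteq> v" using nvx sym[OF xy] by blast
    ultimately show ?thesis using yV by blast
  qed
  have factY: "y \<in> V \<and> \<not> E u y \<and> y \<noteq> u" if x: "x \<in> Y" and xy: "E x y" for x y
  proof -
    have yV: "y \<in> V" using cl xy by blast
    have Evx: "E v x" and nux: "\<not> E u x" and xV: "x \<in> V" using x by (auto simp: Y_def Nb_def)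
    have "\<not> E u y"
    proof
      assume Euy: "E u y"
      have "v \<noteq> y" using Euy nuv by blast
      moreover have "x \<noteq> u" using Evx nvu by blast
      moreover have "E y u" using sym[OF Euy] .
      ultimately show False using Hp[of v u x y] uV vV uv du dv Evx xy Ene[OF Evx] Ene[OF xy] Ene[OF Euy]
        by auto
    qed
    moreover have "y \<noteq> u" using nux sym[OF xy] by blast
    ultimately show ?thesis using yV by blast
  qed
  have Vdec: "V = C \<union> (X \<union> (Y \<union> W))"
    by (auto simp: C_def X_def Y_def W_def Nb_def)
  have d1: "X \<inter> (Y \<union> W) = {}" "Y \<inter> W = {}" "C \<inter> (X \<union> (Y \<union> W)) = {}"
    by (auto simp: C_def X_def Y_def W_def)
  have symE: "\<And>x y. E x y \<Longrightarrow> E y x" using sym by blast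
  have dCX: "C \<inter> (X \<union> (Y \<union> W)) = {}" and dXY: "X \<inter> (Y \<union> W) = {}" and dYW: "Y \<inter> W = {}"
    using d1 by auto
  have fXYW: "finite (X \<union> (Y \<union> W))" and fYW: "finite (Y \<union> W)" using fX fY fW by auto
  have split1: "ec E (C \<union> (X \<union> (Y \<union> W))) B = ec E C B + ec E X B + ec E Y B + ec E W B" for B
    using ec_Un1[OF fC fXYW dCX, of E B] ec_Un1[OF fX fYW dXY, of E B] ec_Un1[OF fY fW dYW, of E B]
    by simp
  have split2: "ec E A (C \<union> (X \<union> (Y \<union> W))) = ec E A C + ec E A X + ec E A Y + ec E A W" for A
    using ec_Un2[OF fC fXYW dCX, of E A] ec_Un2[OF fX fYW dXY, of E A] ec_Un2[OF fY fW dYW, of E A]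
    by simp
  have VV: "ec E V V = ec E (C \<union> (X \<union> (Y \<union> W))) (C \<union> (X \<union> (Y \<union> W)))"
    using Vdec by (rule arg_cong2[where f="ec E"]) (rule Vdec)
  have XW: "X \<inter> W = {}" and YW: "Y \<inter> W = {}" and XC: "X \<inter> C = {}" and YC: "Y \<inter> C = {}" and XY: "X \<inter> Y = {}"
    by (auto simp: X_def Y_def W_def C_def)
  have zCC: "ec E C C = 0" and zCX: "ec E C X = 0" and zCY: "ec E C Y = 0"
    using factA' CW XW YW by (auto intro!: ec_zero)
  have zXC: "ec E X C = 0" by (rule ec_zero) (use factX in \<open>auto simp: C_def Nb_def\<close>)
  have zXY: "ec E X Y = 0" by (rule ec_zero) (use factX in \<open>auto simp: Y_def Nb_def\<close>)
  have zYC: "ec E Y C = 0" by (rule ec_zero) (use factY in \<open>auto simp: C_def Nb_def\<close>)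
  have zYX: "ec E Y X = 0" by (rule ec_zero) (use factY in \<open>auto simp: X_def Nb_def\<close>)
  have sWC: "ec E W C = ec E C W" by (rule ec_sym[OF fW fC symE])
  have sWX: "ec E W X = ec E X W" by (rule ec_sym[OF fW fX symE])
  have sWY: "ec E W Y = ec E Y W" by (rule ec_sym[OF fW fY symE])
  have total: "ec E V V = 2 * ec E C W + ec E W W + ec E X X + 2 * ec E X W + ec E Y Y + 2 * ec E Y W"
    unfolding VV split1 split2 using zCC zCX zCY zXC zXY zYC zYX sWC sWX sWY by simp
  have pos_p: "1 \<le> p" using vW fW card_gt_0_iff[of W] unfolding p_def by auto
  have bXX: "ec E X X + k \<le> k * k"
  proof -
    have "ec E X X + k = (\<Sum>x\<in>X. card {y\<in>X. E x y} + 1)"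
      by (simp add: ec_def sum_Suc k_def)
    also have "\<dots> \<le> (\<Sum>x\<in>X. k)"
    proof (rule sum_mono)
      fix x assume x: "x \<in> X"
      have "{y\<in>X. E x y} \<subseteq> X - {x}" using irr by auto
      then have "card {y\<in>X. E x y} \<le> card (X - {x})" using fX by (simp add: card_mono)
      then show "card {y\<in>X. E x y} + 1 \<le> k" using x fX unfolding k_def
        by (metis card_Diff_singleton card_gt_0_iff Suc_pred' Suc_eq_plus1 empty_iff le_imp_less_Suc Suc_le_eq)
    qed
    finally show ?thesis by (simp add: k_def)
  qed
  have bYY: "ec E Y Y + k \<le> k * k"
  proof -
    have "ec E Y Y + k = (\<Sum>x\<in>Y. card {y\<in>Y. E x y} + 1)"
      by (simp add: ec_def sum_Suc kY')
    also have "\<dots> \<le> (\<Sum>x\<in>Y. k)"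
    proof (rule sum_mono)
      fix x assume x: "x \<in> Y"
      have "{y\<in>Y. E x y} \<subseteq> Y - {x}" using irr by auto
      then have "card {y\<in>Y. E x y} \<le> card (Y - {x})" using fY by (simp add: card_mono)
      then show "card {y\<in>Y. E x y} + 1 \<le> k" using x fY unfolding kY'[symmetric]
        by (metis card_Diff_singleton card_gt_0_iff Suc_pred' Suc_eq_plus1 empty_iff le_imp_less_Suc Suc_le_eq)
    qed
    finally show ?thesis by (simp add: kY')
  qed
  have bXW: "ec E X W + k \<le> k * p"
  proof -
    have "ec E X W + k = (\<Sum>x\<in>X. card {y\<in>W. E x y} + 1)"
      by (simp add: ec_def sum_Suc k_def)
    also have "\<dots> \<le> (\<Sum>x\<in>X. p)"
    proof (rule sum_mono)
      fix x assume x: "x \<in> X"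
      have "{y\<in>W. E x y} \<subseteq> W - {v}" using factX[OF x] by auto
      then have "card {y\<in>W. E x y} \<le> card (W - {v})" using fW by (simp add: card_mono)
      also have "\<dots> = p - 1" using vW fW by (simp add: p_def)
      finally show "card {y\<in>W. E x y} + 1 \<le> p" using pos_p by linarith
    qed
    finally show ?thesis by (simp add: k_def)
  qed
  have bYW: "ec E Y W + k \<le> k * p"
  proof -
    have "ec E Y W + k = (\<Sum>x\<in>Y. card {y\<in>W. E x y} + 1)"
      by (simp add: ec_def sum_Suc kY')
    also have "\<dots> \<le> (\<Sum>x\<in>Y. p)"
    proof (rule sum_mono)
      fix x assume x: "x \<in> Y"
      have "{y\<in>W. E x y} \<subseteq> W - {u}" using factY[OF x] by auto
      then have "card {y\<in>W. E x y} \<le> card (W - {u})" using fW by (simp add: card_mono)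
      also have "\<dots> = p - 1" using uW fW by (simp add: p_def)
      finally show "card {y\<in>W. E x y} + 1 \<le> p" using pos_p by linarith
    qed
    finally show ?thesis by (simp add: kY')
  qed
  have NbC: "Nb w = {y\<in>W. E w y}" if "w \<in> C" for w
    using factA'[OF that] by (auto simp: Nb_def W_def)
  have ABS: "2 * (\<Sum>w\<in>C. card {y\<in>W. E w y}) + (\<Sum>z\<in>W. card {y\<in>W. E z y}) \<le> 2 * card C * card W
     \<and> (2 * (\<Sum>w\<in>C. card {y\<in>W. E w y}) + (\<Sum>z\<in>W. card {y\<in>W. E z y}) = 2 * card C * card W
          \<longrightarrow> (\<forall>z\<in>W. \<forall>y\<in>W. \<not> E z y) \<and> (\<forall>w\<in>C. {y\<in>W. E w y} = W))"
  proof (rule abs_lemma[OF fC fW])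
    show "{y\<in>W. E w y} \<subseteq> W" for w by auto
  next
    fix w1 w2 a d
    assume w1: "w1 \<in> C" and w2: "w2 \<in> C" and ne: "w1 \<noteq> w2"
      and cd: "card {y\<in>W. E w1 y} = card {y\<in>W. E w2 y}"
      and a: "a \<in> {y\<in>W. E w1 y}" and d: "d \<in> {y\<in>W. E w2 y}"
    show "\<not> E a d"
    proof
      assume Ead: "E a d"
      have dg: "degree V E w1 = degree V E w2" using cd NbC w1 w2 degNb by simp
      have "w1 \<noteq> d" "a \<noteq> w2" using a d w1 w2 CW by auto
      moreover have "E w1 a" "E w2 d" using a d by auto
      moreover have "E d w2" using sym[OF \<open>E w2 d\<close>] .
      ultimately show False using Hp[of w1 w2 a d] w1 w2 CV ne dg Ead Ene[of w1 a] Ene[OF Ead] Ene[of w2 d]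
        by auto
    qed
  next
    show "card W + 2 \<le> card C" using cU cW bn by (simp add: p_def c_def)
  qed
  have ABS1: "2 * ec E C W + ec E W W \<le> 2 * c * p" using conjunct1[OF ABS] unfolding ec_def c_def p_def .
  have HS: "ec E V V = 2 * card (edges V E)" by (rule handshake[OF g])
  have n2: "2 * n\<^sup>2 \<le> ec E V V + 2" using HS cE by arith
  have pck: "p + c + 2 * k = 2 * n" using cU cW kX by simp
  obtain d where bd: "b = n + 1 + d" using bn le_Suc_ex by blast
  have nn: "n = p + 1 + d + k" using pck kX bd by linarith
  have cc: "c = p + 2 + 2 * d" using pck kX bd by linarith
  have ineq: "2 * n\<^sup>2 + 6 * k \<le> 2 * c * p + 2 * k * k + 4 * k * p + 2"
    using n2 total ABS1 bXX bYY bXW bYW by linarith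
  have ineq2: "2 * (p + 1 + d + k)\<^sup>2 + 6 * k \<le> 2 * (p + 2 + 2 * d) * p + 2 * k * k + 4 * k * p + 2"
    using ineq unfolding nn[symmetric] cc[symmetric] .
  then have "2 * d * d + 4 * d + 10 * k + 4 * d * k \<le> 0"
    by (simp add: power2_eq_square algebra_simps)
  then have d0: "d = 0" and k0: "k = 0" by simp_all
  have b1: "b = n + 1" using bd d0 by simp
  have Xe: "X = {}" using k0 fX unfolding k_def by (meson card_0_eq)
  have Ye: "Y = {}" using k0 kY' fY by (metis card_0_eq)
  have pn: "p = n - 1" and cn: "c = n + 1" using nn cc d0 k0 by linarith+
  have eqA: "2 * ec E C W + ec E W W = 2 * c * p"
  proof -
    have "ec E X X = 0" "ec E Y Y = 0" "ec E X W = 0" "ec E Y W = 0"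
      using Xe Ye by (simp_all add: ec_def)
    then have "2 * n\<^sup>2 \<le> 2 * ec E C W + ec E W W + 2" using n2 total by linarith
    moreover have "2 * c * p + 2 = 2 * n\<^sup>2"
    proof -
      have "n = p + 1" "c = p + 2" using nn cc d0 k0 by linarith+
      then show ?thesis by (simp add: power2_eq_square algebra_simps)
    qed
    ultimately show ?thesis using ABS1 by linarith
  qed
  then have "2 * (\<Sum>w\<in>C. card {y\<in>W. E w y}) + (\<Sum>z\<in>W. card {y\<in>W. E z y}) = 2 * card C * card W"
    unfolding ec_def c_def p_def .
  then have "(\<forall>z\<in>W. \<forall>y\<in>W. \<not> E z y) \<and> (\<forall>w\<in>C. {y\<in>W. E w y} = W)"
    using conjunct2[OF ABS] by (rule rev_mp)
  then have noW: "\<And>z y. z \<in> W \<Longrightarrow> y \<in> W \<Longrightarrow> \<not> E z y"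
    and fullC: "\<And>w y. w \<in> C \<Longrightarrow> y \<in> W \<Longrightarrow> E w y" by blast+
  have VCW: "V = C \<union> W" using Vdec unfolding Xe Ye by simp
  have adj: "E x y \<longleftrightarrow> (x \<in> C \<longleftrightarrow> y \<notin> C)" if "x \<in> V" "y \<in> V" for x y
  proof (cases "x \<in> C")
    case True
    show ?thesis
    proof (cases "y \<in> C")
      case True
      then show ?thesis using \<open>x \<in> C\<close> factA' CW by blast
    next
      case False
      then have "y \<in> W" using that VCW by blast
      then show ?thesis using fullC \<open>x \<in> C\<close> False by blast
    qed
  next
    case False
    then have xW: "x \<in> W" using that VCW by blast
    show ?thesis
    proof (cases "y \<in> C")
      case True
      then show ?thesis using sym[OF fullC[OF True xW]] False True by blast
    next
      case False
      then have "y \<in> W" using that VCW by blast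
      then show ?thesis using noW xW False \<open>x \<notin> C\<close> by blast
    qed
  qed
  obtain g1 where g1: "bij_betw g1 C {..<n+1}"
    using finite_same_card_bij[OF fC, of "{..<n+1}"] cn by (auto simp: c_def)
  obtain g2 where g2: "bij_betw g2 W {..<n-1}"
    using finite_same_card_bij[OF fW, of "{..<n-1}"] pn by (auto simp: p_def)
  define f where "f x = (if x \<in> C then Inl (g1 x) else Inr (g2 x))" for x :: 'a
  have bC: "bij_betw f C (Inl ` {..<n+1})"
  proof -
    have "bij_betw (Inl \<circ> g1) C (Inl ` {..<n+1})"
      by (rule bij_betw_trans[OF g1]) (simp add: inj_on_imp_bij_betw)
    then show ?thesis by (rule bij_betw_cong[THEN iffD1, rotated]) (simp add: f_def)
  qed
  have bW: "bij_betw f W (Inr ` {..<n-1})"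
  proof -
    have "bij_betw (Inr \<circ> g2) W (Inr ` {..<n-1})"
      by (rule bij_betw_trans[OF g2]) (simp add: inj_on_imp_bij_betw)
    then show ?thesis by (rule bij_betw_cong[THEN iffD1, rotated]) (use CW in \<open>auto simp: f_def\<close>)
  qed
  have bV: "bij_betw f V (KV (n + 1) (n - 1))"
    unfolding VCW KV_def by (rule bij_betw_combine[OF bC bW]) auto
  have fKV: "f x \<in> KV (n + 1) (n - 1)" if "x \<in> V" for x
    using bV that by (auto simp: bij_betw_def)
  have islf: "isl (f x) \<longleftrightarrow> x \<in> C" for x by (simp add: f_def)
  have EK: "E x y \<longleftrightarrow> KE (n + 1) (n - 1) (f x) (f y)" if "x \<in> V" "y \<in> V" for x y
  proof -
    have "KE (n + 1) (n - 1) (f x) (f y) \<longleftrightarrow> ((isl (f x) \<and> \<not> isl (f y)) \<or> (\<not> isl (f x) \<and> isl (f y)))"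
      using fKV[OF that(1)] fKV[OF that(2)] unfolding KE_def by (simp only: simp_thms)
    also have "\<dots> \<longleftrightarrow> ((x \<in> C \<and> y \<notin> C) \<or> (x \<notin> C \<and> y \<in> C))" by (simp only: islf)
    also have "\<dots> \<longleftrightarrow> E x y" using adj[OF that] by blast
    finally show ?thesis by (rule HOL.sym)
  qed
  have allE: "\<forall>x\<in>V. \<forall>y\<in>V. E x y \<longleftrightarrow> KE (n + 1) (n - 1) (f x) (f y)"
    using EK by blast
  have GI: "graph_iso V E (KV (n + 1) (n - 1)) (KE (n + 1) (n - 1))"
    unfolding graph_iso_def by (rule exI[where x=f]) (rule conjI[OF bV allE])
  show ?thesis using b1 GI by (rule conjI)


qed

theorem lemma3p1:
  fixes V :: "'a set" and E :: "'a \<Rightarrow> 'a \<Rightarrow> bool" and n :: nat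
  assumes "simple_graph V E"
    and "n \<ge> 3"
    and "card V = 2 * n"
    and "card (edges V E) \<ge> n\<^sup>2 - 1"
    and "\<forall>u\<in>V. \<forall>v\<in>V. u \<noteq> v \<and> degree V E u = degree V E v \<longrightarrow> \<not> path3 V E u v"
  defines "\<beta> \<equiv> GREATEST k. \<exists>u\<in>V. \<exists>v\<in>V. u \<noteq> v \<and> degree V E u = k \<and> degree V E v = k"
  shows "\<beta> \<le> n + 1 \<and> (\<beta> = n + 1 \<longrightarrow> graph_iso V E (KV (n + 1) (n - 1)) (KE (n + 1) (n - 1)))"
proof -
  note g = assms(1) and n3 = assms(2) and cV = assms(3) and cE = assms(4) and H = assms(5)
  have fV: "finite V" using g by (simp add: simple_graph_def)
  have sym: "E x y \<Longrightarrow> E y x" for x y using g by (simp add: simple_graph_def)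
  have irr: "\<not> E x x" for x using g by (simp add: simple_graph_def)
  define P where "P k \<longleftrightarrow> (\<exists>u\<in>V. \<exists>v\<in>V. u \<noteq> v \<and> degree V E u = k \<and> degree V E v = k)" for k
  have bd: "degree V E x \<le> 2 * n - 1" if "x \<in> V" for x
  proof -
    have "{y\<in>V. E x y} \<subseteq> V - {x}" using irr by auto
    then have "card {y\<in>V. E x y} \<le> card (V - {x})" using fV by (simp add: card_mono)
    then show ?thesis using that fV cV by (simp add: degree_def)
  qed
  have bnd: "y \<le> 2 * n" if "P y" for y
    using that bd unfolding P_def by force
  have exP: "\<exists>k. P k"
  proof (rule ccontr)
    assume nP: "\<not> (\<exists>k. P k)"
    have inj: "inj_on (degree V E) V"
    proof (rule inj_onI)
      fix x y assume "x \<in> V" "y \<in> V" "degree V E x = degree V E y"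
      then show "x = y" using nP unfolding P_def by blast
    qed
    have sub: "degree V E ` V \<subseteq> {..<2 * n}" using bd n3 by fastforce
    have "card (degree V E ` V) = card {..<2 * n}" using card_image[OF inj] cV by simp
    then have eqi: "degree V E ` V = {..<2 * n}" using sub by (simp add: card_subset_eq)
    have "0 \<in> {..<2 * n}" "2 * n - 1 \<in> {..<2 * n}" using n3 by auto
    then obtain x0 x1 where x0: "x0 \<in> V" "degree V E x0 = 0" and x1: "x1 \<in> V" "degree V E x1 = 2 * n - 1"
      unfolding eqi[symmetric] by (metis imageE)
    have "x0 \<noteq> x1" using x0 x1 n3 by auto
    have s1: "{y\<in>V. E x1 y} \<subseteq> V - {x1}" using irr by auto
    moreover have "card {y\<in>V. E x1 y} = card (V - {x1})" using x1 fV cV by (simp add: degree_def)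
    ultimately have "{y\<in>V. E x1 y} = V - {x1}" using fV by (simp add: card_subset_eq)
    then have "E x1 x0" using \<open>x0 \<noteq> x1\<close> x0 by blast
    then have "x1 \<in> {y\<in>V. E x0 y}" using sym[of x1 x0] x1 by simp
    then have "card {y\<in>V. E x0 y} \<noteq> 0" using fV by auto
    then show False using x0 by (simp add: degree_def)
  qed
  have Pb: "P \<beta>" unfolding \<beta>_def P_def[symmetric] using exP bnd by (rule GreatestI_ex_nat)
  then obtain u v where uv: "u \<in> V" "v \<in> V" "u \<noteq> v" "degree V E u = \<beta>" "degree V E v = \<beta>"
    unfolding P_def by blast
  show ?thesis
  proof (cases "\<beta> \<le> n")
    case True
    then show ?thesis by simp
  next
    case False
    then have "n + 1 \<le> \<beta>" by simp
    from core[OF g n3 cV cE H uv this] show ?thesis by simp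
  qed
qed

end
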